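(* Let $G$ be a second countable locally compact group, $\Omega$ a homogeneous space of $G$, $F$ a closed subgroup of $G$, and $y\in\Omega$ such that $\overline{Fy}$ is a compact $F$-minimal subset of $\Omega$ but $F/(F\cap G_y)$ is not compact (equivalently $Fy$ is not compact). Then the identity $e$ lies in the closure of $\{g\in G\setminus F: gy\in Fy\}$.
   Context: $G_y=\{h\in G: hy=y\}$ is the stabilizer of $y$. For a closed subgroup $F\subset G$, a closed $F$-invariant subset $Y\subset\Omega$ is called $F$-minimal if it contains no proper nonempty closed $F$-invariant subset, i.e. $Fy$ is dense in $Y$ for every $y\in Y$. *)

theory Defs
  imports "HOL-Analysis.Analysis"
begin

text \<open>Groups are written additively (class group_add, which is NOT assumed commutative):
  0 is the identity e, a + b is the product ab, - a the inverse.\<close>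

definition topological_group :: "'g::{group_add,topological_space} itself \<Rightarrow> bool" where
  "topological_group _ \<longleftrightarrow>
     continuous_on UNIV (\<lambda>p::'g \<times> 'g. fst p + snd p) \<and> continuous_on UNIV (uminus :: 'g \<Rightarrow> 'g)"

definition closed_subgroup :: "'g::{group_add,topological_space} set \<Rightarrow> bool" where
  "closed_subgroup F \<longleftrightarrow> closed F \<and> 0 \<in> F \<and> (\<forall>a\<in>F. \<forall>b\<in>F. a + b \<in> F) \<and> (\<forall>a\<in>F. - a \<in> F)"

text \<open>Omega is a homogeneous space of G: a Hausdorff space with a continuous transitive
  G-action such that the orbit maps g \<mapsto> g x are open (so that G/G_x \<cong> Omega).\<close>
definition homogeneous_space :: "('g::{group_add,topological_space} \<Rightarrow> 'o::topological_space \<Rightarrow> 'o) \<Rightarrow> bool" where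
  "homogeneous_space act \<longleftrightarrow>
     (\<forall>x. act 0 x = x) \<and> (\<forall>a b x. act (a + b) x = act a (act b x)) \<and>
     continuous_on UNIV (\<lambda>p. act (fst p) (snd p)) \<and>
     (\<forall>x z. \<exists>g. act g x = z) \<and>
     (\<forall>x U. open U \<longrightarrow> open ((\<lambda>g. act g x) ` U))"

definition stabilizer :: "('g \<Rightarrow> 'o \<Rightarrow> 'o) \<Rightarrow> 'o \<Rightarrow> 'g set" where
  "stabilizer act y = {h. act h y = y}"

definition invariant_under :: "('g \<Rightarrow> 'o \<Rightarrow> 'o) \<Rightarrow> 'g set \<Rightarrow> 'o set \<Rightarrow> bool" where
  "invariant_under act F Y \<longleftrightarrow> (\<forall>f\<in>F. \<forall>y\<in>Y. act f y \<in> Y)"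

definition F_minimal :: "('g \<Rightarrow> 'o::topological_space \<Rightarrow> 'o) \<Rightarrow> 'g set \<Rightarrow> 'o set \<Rightarrow> bool" where
  "F_minimal act F Y \<longleftrightarrow> closed Y \<and> Y \<noteq> {} \<and> invariant_under act F Y \<and>
     (\<forall>Z. Z \<subseteq> Y \<and> Z \<noteq> {} \<and> closed Z \<and> invariant_under act F Z \<longrightarrow> Z = Y)"

definition lcoset :: "'g::group_add \<Rightarrow> 'g set \<Rightarrow> 'g set" where
  "lcoset f H = (\<lambda>h. f + h) ` H"

definition coset_space_top :: "'g::{group_add,topological_space} set \<Rightarrow> 'g set \<Rightarrow> 'g set topology" where
  "coset_space_top F H = topology (\<lambda>S. S \<subseteq> (\<lambda>f. lcoset f H) ` F \<and>
       openin (top_of_set F) {f \<in> F. lcoset f H \<in> S})"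

end

theory Submission
  imports Defs
begin

theorem lemma3p4:
  fixes act :: "'g::{group_add, t2_space, second_countable_topology} \<Rightarrow> 'o::t2_space \<Rightarrow> 'o"
    and F :: "'g set" and y :: 'o
  assumes "topological_group TYPE('g)"
    and "locally compact (UNIV :: 'g set)"
    and "homogeneous_space act"
    and "closed_subgroup F"
    and "compact (closure ((\<lambda>f. act f y) ` F))"
    and "F_minimal act F (closure ((\<lambda>f. act f y) ` F))"
    and "\<not> compact_space (coset_space_top F (F \<inter> stabilizer act y))"
  shows "0 \<in> closure {g. g \<notin> F \<and> act g y \<in> (\<lambda>f. act f y) ` F}"
proof (rule ccontr)
  assume nc: "0 \<notin> closure {g. g \<notin> F \<and> act g y \<in> (\<lambda>f. act f y) ` F}"
  define Fy where "Fy = (\<lambda>f. act f y) ` F"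
  define Y where "Y = closure Fy"
  define H where "H = F \<inter> stabilizer act y"
  have act0: "\<And>x. act 0 x = x" and actadd: "\<And>a b x. act (a + b) x = act a (act b x)"
    and actc: "continuous_on UNIV (\<lambda>p. act (fst p) (snd p))"
    and actopen: "\<And>x U. open U \<Longrightarrow> open ((\<lambda>g. act g x) ` U)"
    using assms(3) unfolding homogeneous_space_def by auto
  have Fcl: "closed F" and F0: "0 \<in> F" and Fadd: "\<And>a b. a \<in> F \<Longrightarrow> b \<in> F \<Longrightarrow> a + b \<in> F"
    and Fneg: "\<And>a. a \<in> F \<Longrightarrow> - a \<in> F"
    using assms(4) unfolding closed_subgroup_def by auto
  have addc: "continuous_on UNIV (\<lambda>p::'g \<times> 'g. fst p + snd p)"
    using assms(1) unfolding topological_group_def by auto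
  have actinv: "\<And>f x. act (- f) (act f x) = x"
    by (metis actadd act0 add.left_inverse)
  have actf_cont: "continuous_on UNIV (act f)" for f
  proof -
    have "continuous_on UNIV ((\<lambda>p. act (fst p) (snd p)) \<circ> (\<lambda>z. (f, z)))"
      by (rule continuous_on_compose) (auto intro!: continuous_intros actc[THEN continuous_on_subset])
    thus ?thesis by (simp add: o_def)
  qed
  have orbit_cont: "continuous_on UNIV (\<lambda>g. act g y)"
  proof -
    have "continuous_on UNIV ((\<lambda>p. act (fst p) (snd p)) \<circ> (\<lambda>g. (g, y)))"
      by (rule continuous_on_compose) (auto intro!: continuous_intros actc[THEN continuous_on_subset])
    thus ?thesis by (simp add: o_def)
  qed
  have transl_cont: "continuous_on UNIV (\<lambda>k. i + k)" for i :: 'g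
  proof -
    have "continuous_on UNIV ((\<lambda>p::'g \<times> 'g. fst p + snd p) \<circ> (\<lambda>k. (i, k)))"
      by (rule continuous_on_compose) (auto intro!: continuous_intros addc[THEN continuous_on_subset])
    thus ?thesis by (simp add: o_def)
  qed
  have actf_open: "open (act f ` W)" if "open W" for f W
  proof -
    have "act f ` W = act (- f) -` W"
      by (auto simp: image_def) (metis actinv add.inverse_inverse)+
    moreover have "open (act (- f) -` W)"
      using actf_cont[of "- f"] that by (simp add: continuous_on_open_vimage)
    ultimately show ?thesis by simp
  qed
  define U0 where "U0 = - closure {g. g \<notin> F \<and> act g y \<in> Fy}"
  have U0: "open U0" "0 \<in> U0" "U0 \<inter> {g. g \<notin> F \<and> act g y \<in> Fy} = {}"
    using nc closure_subset[of "{g. g \<notin> F \<and> act g y \<in> Fy}"] unfolding U0_def Fy_def by auto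
  have "\<exists>u K. openin (top_of_set UNIV) u \<and> compact K \<and> (0::'g) \<in> u \<and> u \<subseteq> K \<and> K \<subseteq> UNIV"
    using assms(2) unfolding locally_def by (meson UNIV_I openin_subtopology_self)
  then obtain u K :: "'g set" where uK: "open u" "compact K" "0 \<in> u" "u \<subseteq> K"
    by (auto simp: subtopology_UNIV)
  define U where "U = U0 \<inter> u"
  have Uo: "open U" and U0in: "0 \<in> U" and UK: "U \<subseteq> K" using U0 uK by (auto simp: U_def)
  have Uprop: "\<And>g. g \<in> U \<Longrightarrow> act g y \<in> Fy \<Longrightarrow> g \<in> F" using U0 by (auto simp: U_def)
  define V where "V = (\<lambda>g. act g y) ` U"
  have Vo: "open V" using actopen Uo by (simp add: V_def)
  have yV: "y \<in> V" unfolding V_def by (rule image_eqI[where x=0]) (simp_all add: act0 U0in)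
  have VFy: "V \<inter> Fy \<subseteq> (\<lambda>g. act g y) ` (K \<inter> F)"
    using Uprop UK by (force simp: V_def)
  have KFc: "compact (K \<inter> F)" using uK(2) Fcl by (simp add: compact_Int_closed)
  have KFyc: "compact ((\<lambda>g. act g y) ` (K \<inter> F))"
    by (rule compact_continuous_image[OF continuous_on_subset[OF orbit_cont] KFc]) auto
  have KFyF: "(\<lambda>g. act g y) ` (K \<inter> F) \<subseteq> Fy" by (auto simp: Fy_def)
  have YV: "Y \<inter> V \<subseteq> Fy"
  proof -
    have "Y \<inter> V \<subseteq> closure (V \<inter> Fy)" using open_Int_closure_subset[OF Vo, of Fy]
      by (auto simp: Y_def)
    also have "\<dots> \<subseteq> (\<lambda>g. act g y) ` (K \<inter> F)"
      using VFy KFyc by (simp add: closure_minimal compact_imp_closed)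
    finally show ?thesis using KFyF by blast
  qed
  have yFy: "y \<in> Fy" unfolding Fy_def by (rule image_eqI[where x=0]) (simp_all add: act0 F0)
  have FyY: "Fy \<subseteq> Y" by (simp add: Y_def closure_subset)
  have Yinv: "invariant_under act F Y" using assms(6) by (simp add: F_minimal_def Y_def Fy_def)
  have Fyinv: "f \<in> F \<Longrightarrow> z \<in> Fy \<Longrightarrow> act f z \<in> Fy" for f z
  proof -
    assume f: "f \<in> F" and z: "z \<in> Fy"
    then obtain g where g: "g \<in> F" "z = act g y" by (auto simp: Fy_def)
    hence "act f z = act (f + g) y" by (simp add: actadd)
    moreover have "f + g \<in> F" using Fadd f g by blast
    ultimately show ?thesis by (auto simp: Fy_def)
  qed
  have Fyinv2: "f \<in> F \<Longrightarrow> act f z \<in> Fy \<Longrightarrow> z \<in> Fy" for f z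
    using Fyinv[of "- f" "act f z"] Fneg actinv by metis
  have cover: "Fy \<subseteq> (\<Union>f\<in>F. act f ` V)" using yV by (auto simp: Fy_def)
  have diffeq: "Y - Fy = Y - (\<Union>f\<in>F. act f ` V)"
  proof
    show "Y - Fy \<subseteq> Y - (\<Union>f\<in>F. act f ` V)"
    proof
      fix x assume x: "x \<in> Y - Fy"
      have "x \<notin> act f ` V" if f: "f \<in> F" for f
      proof
        assume "x \<in> act f ` V"
        then obtain v where v: "v \<in> V" "x = act f v" by blast
        have "act (- f) x \<in> Y" using Yinv x Fneg f unfolding invariant_under_def by blast
        hence "v \<in> Fy" using YV v actinv by auto
        hence "x \<in> Fy" using Fyinv f v by blast
        thus False using x by blast
      qed
      thus "x \<in> Y - (\<Union>f\<in>F. act f ` V)" using x by blast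
    qed
    show "Y - (\<Union>f\<in>F. act f ` V) \<subseteq> Y - Fy" using cover by blast
  qed
  have "closed (Y - (\<Union>f\<in>F. act f ` V))"
    unfolding Y_def by (intro closed_Diff closed_closure open_UN ballI actf_open Vo)
  hence Zcl: "closed (Y - Fy)" by (simp only: diffeq)
  have Zinv: "invariant_under act F (Y - Fy)"
    using Yinv Fyinv2 unfolding invariant_under_def by blast
  have "Y - Fy = {}"
  proof (rule ccontr)
    assume "Y - Fy \<noteq> {}"
    hence "Y - Fy = Y" using assms(6) Zcl Zinv unfolding F_minimal_def Y_def Fy_def by blast
    thus False using yFy FyY by blast
  qed
  hence YFy: "Y \<subseteq> Fy" by blast
  have Yc: "compact Y" using assms(5) by (simp add: Y_def Fy_def)
  have YC: "Y \<subseteq> (\<Union>f\<in>F. act f ` V)" using cover YFy by blast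
  obtain C' where C': "C' \<subseteq> F" "finite C'" "Y \<subseteq> (\<Union>i\<in>C'. act i ` V)"
    by (rule compactE_image[OF Yc _ YC]) (rule actf_open[OF Vo])
  define C where "C = (\<Union>i\<in>C'. (\<lambda>k. i + k) ` (K \<inter> F))"
  have Cc: "compact C" unfolding C_def
    using C'(2) KFc by (intro compact_UN) (auto intro: compact_continuous_image[OF continuous_on_subset[OF transl_cont]])
  have CF: "C \<subseteq> F" using C'(1) Fadd by (auto simp: C_def)
  have H0: "\<And>a b. a \<in> H \<Longrightarrow> b \<in> H \<Longrightarrow> a + b \<in> H"
    using Fadd actadd by (auto simp: H_def stabilizer_def)
  have Hneg: "\<And>a. a \<in> H \<Longrightarrow> - a \<in> H"
    using Fneg actinv by (auto simp: H_def stabilizer_def) (metis actinv)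
  have Hshift: "(\<lambda>x. h + x) ` H = H" if "h \<in> H" for h
  proof
    show "(\<lambda>x. h + x) ` H \<subseteq> H" using H0 that by auto
    show "H \<subseteq> (\<lambda>x. h + x) ` H"
    proof
      fix x assume "x \<in> H"
      hence "- h + x \<in> H" using H0 Hneg that by blast
      moreover have "x = h + (- h + x)" by (simp add: add.assoc[symmetric])
      ultimately show "x \<in> (\<lambda>x. h + x) ` H" by blast
    qed
  qed
  have cosrep: "\<exists>c\<in>C. lcoset f H = lcoset c H" if fF: "f \<in> F" for f
  proof -
    have "act f y \<in> Y" using fF FyY by (auto simp: Fy_def)
    then obtain i v where iv: "i \<in> C'" "v \<in> V" "act f y = act i v" using C'(3) by blast
    have v: "v = act (- i + f) y" using iv actinv actadd by metis
    have "v \<in> Fy" using v fF C'(1) iv Fneg Fadd by (auto simp: Fy_def)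
    then obtain k where k: "k \<in> U" "v = act k y" using iv(2) by (auto simp: V_def)
    hence kF: "k \<in> F" using Uprop \<open>v \<in> Fy\<close> by auto
    define h where "h = - k + (- i + f)"
    have "act h y = y" unfolding h_def using k v actadd actinv by metis
    moreover have "h \<in> F" unfolding h_def using kF fF C'(1) iv Fneg Fadd by blast
    ultimately have hH: "h \<in> H" by (simp add: H_def stabilizer_def)
    have fe: "f = (i + k) + h" unfolding h_def by (simp only: add.assoc add_minus_cancel)
    have cC: "i + k \<in> C" using iv(1) k UK kF by (auto simp: C_def)
    have "lcoset f H = (\<lambda>x. (i + k) + x) ` ((\<lambda>x. h + x) ` H)"
      unfolding lcoset_def fe by (simp add: image_image add.assoc)
    also have "\<dots> = lcoset (i + k) H" using Hshift[OF hH] by (simp add: lcoset_def)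
    finally show ?thesis using cC by blast
  qed
  define P where "P = (\<lambda>f. lcoset f H) ` F"
  define Op where "Op = (\<lambda>S. S \<subseteq> P \<and> openin (top_of_set F) {f \<in> F. lcoset f H \<in> S})"
  have i1: "\<forall>S T. Op S \<longrightarrow> Op T \<longrightarrow> Op (S \<inter> T)"
  proof (intro allI impI)
    fix S T assume S: "Op S" and T: "Op T"
    have e: "{f \<in> F. lcoset f H \<in> S \<inter> T} = {f \<in> F. lcoset f H \<in> S} \<inter> {f \<in> F. lcoset f H \<in> T}" by blast
    show "Op (S \<inter> T)" using S T unfolding Op_def e by (auto intro: openin_Int)
  qed
  have i2: "\<forall>KK. Ball KK Op \<longrightarrow> Op (\<Union>KK)"
  proof (intro allI impI)
    fix KK assume KK: "Ball KK Op"
    have e: "{f \<in> F. lcoset f H \<in> \<Union>KK} = (\<Union>S\<in>KK. {f \<in> F. lcoset f H \<in> S})" by blast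
    show "Op (\<Union>KK)" using KK unfolding Op_def e by (auto intro!: openin_Union)
  qed
  have isto: "istopology Op" unfolding istopology_def using i1 i2 by blast
  have cst: "coset_space_top F H = topology Op"
    unfolding coset_space_top_def Op_def P_def ..
  have opn: "openin (coset_space_top F H) = Op" using cst isto by simp
  have top: "topspace (coset_space_top F H) = P"
  proof -
    have e: "{f \<in> F. lcoset f H \<in> (\<lambda>f. lcoset f H) ` F} = F" by blast
    have "Op P" unfolding Op_def P_def e by simp
    hence "P \<subseteq> topspace (coset_space_top F H)" using opn by (metis openin_subset)
    moreover have "topspace (coset_space_top F H) \<subseteq> P"
      unfolding topspace_def using opn by (auto simp: Op_def)
    ultimately show ?thesis by blast
  qed
  have cm: "continuous_map (top_of_set F) (coset_space_top F H) (\<lambda>f. lcoset f H)"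
    unfolding continuous_map_def using opn top by (auto simp: Op_def P_def)
  have "compactin (top_of_set F) C" using Cc CF by (simp add: compactin_subtopology)
  hence "compactin (coset_space_top F H) ((\<lambda>f. lcoset f H) ` C)" using cm by (rule image_compactin)
  moreover have "(\<lambda>f. lcoset f H) ` C = P"
    unfolding P_def using CF cosrep by (force simp: image_def)
  ultimately have "compact_space (coset_space_top F H)" using top by (simp add: compact_space_def)
  thus False using assms(7) by (simp add: H_def)
qed

end
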